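(* The family $\mathcal{FG}$ of functionally generated portfolio maps, with the topology of uniform convergence (supremum metric), is not totally bounded; in fact it is not separable.
   Context: $n\ge2$; $\Delta_n=\{p\in(0,1)^n:\sum p_i=1\}$, $\overline{\Delta}_n$ its closure. A map $\pi:\Delta_n\to\overline{\Delta}_n$ is functionally generated if there is a concave $\Phi:\Delta_n\to(0,\infty)$ with $\sum_i\pi_i(p)\frac{q_i}{p_i}\ge\frac{\Phi(q)}{\Phi(p)}$ for all $p,q\in\Delta_n$. The metric is $\|\pi-\eta\|_\infty=\sup_{p\in\Delta_n}|\pi(p)-\eta(p)|$. *)

theory Defs
  imports "HOL-Analysis.Analysis"
begin

definition open_simplex :: "(real ^ 'n) set" where
  "open_simplex = {p. (\<forall>i. 0 < p $ i \<and> p $ i < 1) \<and> (\<Sum>i\<in>UNIV. p $ i) = 1}"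

text \<open>Functionally generated portfolio maps pi : open_simplex -> closure open_simplex.
  Values outside the open_simplex are irrelevant (the metric only looks at the open_simplex).\<close>
definition functionally_generated :: "(real ^ 'n \<Rightarrow> real ^ 'n) \<Rightarrow> bool" where
  "functionally_generated \<pi> \<longleftrightarrow>
     (\<forall>p\<in>open_simplex. \<pi> p \<in> closure open_simplex) \<and>
     (\<exists>\<Phi> :: real ^ 'n \<Rightarrow> real.
        concave_on open_simplex \<Phi> \<and> (\<forall>p\<in>open_simplex. 0 < \<Phi> p) \<and>
        (\<forall>p\<in>open_simplex. \<forall>q\<in>open_simplex.
           (\<Sum>i\<in>UNIV. \<pi> p $ i * (q $ i / p $ i)) \<ge> \<Phi> q / \<Phi> p))"

definition FG :: "(real ^ 'n \<Rightarrow> real ^ 'n) set" where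
  "FG = {\<pi>. functionally_generated \<pi>}"

definition sup_dist :: "(real ^ 'n \<Rightarrow> real ^ 'n) \<Rightarrow> (real ^ 'n \<Rightarrow> real ^ 'n) \<Rightarrow> real" where
  "sup_dist \<pi> \<eta> = (SUP p\<in>open_simplex. norm (\<pi> p - \<eta> p))"

end

theory Submission
  imports Defs
begin

lemma os_D: assumes "p \<in> open_simplex" shows "0 < p $ j" "p $ j < 1" "(\<Sum>i\<in>UNIV. p $ i) = 1"
  using assms by (auto simp: open_simplex_def)

lemma convex_os: "convex (open_simplex :: (real^'n) set)"
proof (rule convexI)
  fix x y :: "real^'n" and u v :: real
  assume x: "x \<in> open_simplex" and y: "y \<in> open_simplex" and u: "0 \<le> u" and v: "0 \<le> v" and uv: "u + v = 1"
  have c: "0 < (u *\<^sub>R x + v *\<^sub>R y) $ i \<and> (u *\<^sub>R x + v *\<^sub>R y) $ i < 1" for i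
  proof -
    have a: "0 < x$i" "x$i < 1" "0 < y$i" "y$i<1" using x y by (auto simp: os_D)
    have "(u *\<^sub>R x + v *\<^sub>R y) $ i = u * x$i + v * y$i" by simp
    moreover have "0 < u * x$i + v * y$i"
    proof (cases "u = 0")
      case True then show ?thesis using uv a by simp
    next
      case False then have "u > 0" using u by simp
      then show ?thesis using a v by (simp add: add_pos_nonneg)
    qed
    moreover have "u * x$i + v * y$i < 1"
    proof -
      have 1: "u * x$i \<le> u" "v * y$i \<le> v" using a u v by (auto intro: mult_left_le)
      show ?thesis
      proof (cases "u = 0")
        case True then show ?thesis using uv a by simp
      next
        case False then have "u > 0" using u by simp
        then have "u * x$i < u" using a by simp
        then show ?thesis using 1 uv by linarith
      qed
    qed
    ultimately show ?thesis by simp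
  qed
  have "(\<Sum>i\<in>UNIV. (u *\<^sub>R x + v *\<^sub>R y) $ i) = u * (\<Sum>i\<in>UNIV. x$i) + v * (\<Sum>i\<in>UNIV. y$i)"
    by (simp add: sum.distrib sum_distrib_left)
  also have "\<dots> = 1" using x y uv by (simp add: os_D)
  finally show "u *\<^sub>R x + v *\<^sub>R y \<in> open_simplex" using c by (simp add: open_simplex_def)
qed

lemma closure_os_bound:
  assumes "x \<in> closure (open_simplex :: (real^'n) set)"
  shows "norm x \<le> real CARD('n)"
proof -
  have cl: "closed {x :: real^'n. \<forall>i. 0 \<le> x$i \<and> x$i \<le> 1}"
    by (intro closed_Collect_all closed_Collect_conj closed_Collect_le continuous_intros)
  have "open_simplex \<subseteq> {x :: real^'n. \<forall>i. 0 \<le> x$i \<and> x$i \<le> 1}"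
    by (auto simp: open_simplex_def less_imp_le)
  then have "closure open_simplex \<subseteq> {x :: real^'n. \<forall>i. 0 \<le> x$i \<and> x$i \<le> 1}"
    using cl closure_minimal by blast
  then have b: "\<forall>i. 0 \<le> x$i \<and> x$i \<le> 1" using assms by blast
  have "norm x \<le> (\<Sum>i\<in>UNIV. \<bar>x$i\<bar>)" by (rule norm_le_l1_cart)
  also have "\<dots> \<le> (\<Sum>i\<in>(UNIV::'n set). 1)" using b by (intro sum_mono) auto
  also have "\<dots> = real CARD('n)" by simp
  finally show ?thesis .
qed

lemma sup_dist_ge:
  assumes "\<pi> \<in> FG" "\<eta> \<in> FG" "p \<in> open_simplex"
  shows "norm (\<pi> p - \<eta> p) \<le> sup_dist \<pi> (\<eta> :: real^'n \<Rightarrow> real^'n)"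
proof -
  have "\<forall>q\<in>open_simplex. norm (\<pi> q - \<eta> q) \<le> 2 * real CARD('n)"
  proof
    fix q :: "real^'n" assume q: "q \<in> open_simplex"
    have "\<pi> q \<in> closure open_simplex" "\<eta> q \<in> closure open_simplex"
      using assms q by (auto simp: FG_def functionally_generated_def)
    then have "norm (\<pi> q) \<le> real CARD('n)" "norm (\<eta> q) \<le> real CARD('n)"
      by (auto intro: closure_os_bound)
    then show "norm (\<pi> q - \<eta> q) \<le> 2 * real CARD('n)"
      using norm_triangle_ineq4[of "\<pi> q" "\<eta> q"] by linarith
  qed
  then have "bdd_above ((\<lambda>q. norm (\<pi> q - \<eta> q)) ` open_simplex)"
    by (auto intro: bdd_aboveI2)
  then show ?thesis unfolding sup_dist_def using assms(3) by (rule cSUP_upper2) simp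
qed

definition pif :: "'n::finite \<Rightarrow> real \<Rightarrow> real^'n \<Rightarrow> real^'n" where
  "pif i t p = (if p$i < t then (\<chi> j. (if j = i then 2 else 1) * p$j / (1 + p$i)) else p)"

definition Phit :: "'n::finite \<Rightarrow> real \<Rightarrow> real^'n \<Rightarrow> real" where
  "Phit i t p = min 1 ((1 + p$i) / (1 + t))"

lemma sum_weighted:
  fixes q :: "real^'n"
  shows "(\<Sum>j\<in>UNIV. (if j = i then 2 else 1) * q$j) = (\<Sum>j\<in>UNIV. q$j) + q$i"
proof -
  have "(\<Sum>j\<in>UNIV. (if j = i then 2 else 1) * q$j) = (\<Sum>j\<in>UNIV. q$j + (if j = i then q$j else 0))"
    by (intro sum.cong) auto
  also have "\<dots> = (\<Sum>j\<in>UNIV. q$j) + q$i" by (simp add: sum.distrib)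
  finally show ?thesis .
qed

lemma pif_in_os:
  assumes p: "p \<in> open_simplex" shows "pif i t p \<in> open_simplex"
proof (cases "p$i < t")
  case False then show ?thesis using p by (simp add: pif_def)
next
  case True
  have a: "0 < p$j" "p$j < 1" for j using p by (auto simp: os_D)
  have pos: "1 + p$i > 0" using a[of i] by simp
  have c: "0 < (if j = i then 2 else 1) * p$j / (1 + p$i) \<and> (if j = i then 2 else 1) * p$j / (1 + p$i) < 1" for j
  proof -
    have "(if j = i then 2 else 1) * p$j < 1 + p$i"
      using a[of j] a[of i] by (cases "j = i") auto
    then show ?thesis using pos a[of j] by (simp add: divide_less_eq)
  qed
  have "(\<Sum>j\<in>UNIV. (if j = i then 2 else 1) * p$j / (1 + p$i)) = (\<Sum>j\<in>UNIV. (if j = i then 2 else 1) * p$j) / (1 + p$i)"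
    by (simp add: sum_divide_distrib)
  also have "\<dots> = 1" using pos os_D(3)[OF p] by (simp add: sum_weighted)
  finally show ?thesis using True c by (simp add: pif_def open_simplex_def)
qed

lemma Phit_concave: "concave_on open_simplex (Phit i t)"
  unfolding concave_on_iff
proof (intro conjI convex_os ballI allI impI)
  fix x y :: "real^'a" and u v :: real
  assume "0 \<le> u" "0 \<le> v" "u + v = 1"
  have "(u *\<^sub>R x + v *\<^sub>R y) $ i = u * x$i + v * y$i" by simp
  have e: "(1 + (u *\<^sub>R x + v *\<^sub>R y) $ i) / (1 + t) = u * ((1 + x$i) / (1 + t)) + v * ((1 + y$i) / (1 + t))"
    using \<open>u + v = 1\<close> by (simp add: field_simps add_divide_distrib) (metis add_divide_distrib distrib_left mult.commute mult.right_neutral times_divide_eq_right)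
  have m1: "u * min 1 a + v * min 1 b \<le> 1" for a b using \<open>0 \<le> u\<close> \<open>0 \<le> v\<close> \<open>u + v = 1\<close>
  proof -
    have "u * min 1 a \<le> u * 1" "v * min 1 b \<le> v * 1" using \<open>0 \<le> u\<close> \<open>0 \<le> v\<close>
      by (intro mult_left_mono; simp)+
    then show ?thesis using \<open>u + v = 1\<close> by simp
  qed
  have m2: "u * min 1 a + v * min 1 b \<le> u * a + v * b" for a b using \<open>0 \<le> u\<close> \<open>0 \<le> v\<close>
  proof -
    have "u * min 1 a \<le> u * a" "v * min 1 b \<le> v * b" using \<open>0 \<le> u\<close> \<open>0 \<le> v\<close>
      by (intro mult_left_mono; simp)+
    then show ?thesis by simp
  qed
  show "u * Phit i t x + v * Phit i t y \<le> Phit i t (u *\<^sub>R x + v *\<^sub>R y)"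
    unfolding Phit_def e by (intro min.boundedI m1 m2)
qed

lemma pif_FG:
  assumes t: "0 < t" shows "pif i t \<in> FG"
  unfolding FG_def functionally_generated_def mem_Collect_eq
proof (intro conjI ballI exI[of _ "Phit i t"])
  fix p :: "real^'a" assume "p \<in> open_simplex"
  then show "pif i t p \<in> closure open_simplex" using pif_in_os closure_subset by blast
next
  show "concave_on open_simplex (Phit i t)" by (rule Phit_concave)
next
  fix p :: "real^'a" assume "p \<in> open_simplex"
  then have "0 < p$i" by (simp add: os_D)
  then show "0 < Phit i t p" using t by (simp add: Phit_def)
next
  fix p q :: "real^'a" assume p: "p \<in> open_simplex" and q: "q \<in> open_simplex"
  have ap: "0 < p$j" for j using p by (simp add: os_D)
  have aq: "0 < q$j" for j using q by (simp add: os_D)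
  have sq: "(\<Sum>j\<in>UNIV. q$j) = 1" using q by (simp add: os_D)
  have Phq1: "Phit i t q \<le> 1" "Phit i t q \<le> (1 + q$i) / (1 + t)" by (auto simp: Phit_def)
  have Phq0: "0 < Phit i t q" using aq[of i] t by (simp add: Phit_def)
  show "Phit i t q / Phit i t p \<le> (\<Sum>j\<in>UNIV. pif i t p $ j * (q $ j / p $ j))"
  proof (cases "p$i < t")
    case True
    have "(\<Sum>j\<in>UNIV. pif i t p $ j * (q $ j / p $ j)) = (\<Sum>j\<in>UNIV. (if j = i then 2 else 1) * q$j / (1 + p$i))"
    proof (intro sum.cong refl)
      fix j :: 'a
      have "p$j \<noteq> 0" "1 + p$i \<noteq> 0" using ap[of j] ap[of i] by auto
      then show "pif i t p $ j * (q $ j / p $ j) = (if j = i then 2 else 1) * q$j / (1 + p$i)"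
        using True by (simp add: pif_def field_simps)
    qed
    also have "\<dots> = (1 + q$i) / (1 + p$i)"
      by (simp add: sum_divide_distrib[symmetric] sum_weighted sq)
    finally have L: "(\<Sum>j\<in>UNIV. pif i t p $ j * (q $ j / p $ j)) = (1 + q$i) / (1 + p$i)" .
    have Pp: "Phit i t p = (1 + p$i) / (1 + t)" using True t by (simp add: Phit_def)
    have "Phit i t q / Phit i t p \<le> ((1 + q$i) / (1 + t)) / ((1 + p$i) / (1 + t))"
      unfolding Pp using Phq1(2) ap[of i] t by (intro divide_right_mono) auto
    also have "\<dots> = (1 + q$i) / (1 + p$i)" using t by simp
    finally show ?thesis using L by simp
  next
    case False
    have "(\<Sum>j\<in>UNIV. pif i t p $ j * (q $ j / p $ j)) = (\<Sum>j\<in>UNIV. q$j)"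
      using False ap by (intro sum.cong refl) (simp add: pif_def less_imp_neq[THEN not_sym])
    moreover have "Phit i t p = 1" using False t by (simp add: Phit_def)
    ultimately show ?thesis using Phq1 sq by simp
  qed
qed

lemma point_exists:
  assumes n: "CARD('n::finite) \<ge> 2" and s: "0 < s" "s < 1"
  shows "\<exists>p::real^'n. p \<in> open_simplex \<and> p$i = s"
proof -
  define c where "c = (1 - s) / (real CARD('n) - 1)"
  have n1: "real CARD('n) - 1 \<ge> 1" using n by simp
  have c0: "0 < c" "c < 1" using s n1 by (auto simp: c_def divide_less_eq)
  define p :: "real^'n" where "p = (\<chi> j. if j = i then s else c)"
  have "(\<Sum>j\<in>UNIV. p$j) = p$i + (\<Sum>j\<in>UNIV-{i}. p$j)"
    by (simp add: sum.remove)
  also have "(\<Sum>j\<in>UNIV-{i}. p$j) = (\<Sum>j\<in>UNIV-{i}. c)"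
    by (intro sum.cong) (auto simp: p_def)
  also have "\<dots> = (real CARD('n) - 1) * c" by (simp add: card_Diff_singleton of_nat_diff)
  also have "\<dots> = 1 - s" using n1 by (simp add: c_def)
  finally have "(\<Sum>j\<in>UNIV. p$j) = 1" by (simp add: p_def)
  moreover have "0 < p$j \<and> p$j < 1" for j using s c0 by (simp add: p_def)
  ultimately show ?thesis by (intro exI[of _ p]) (simp add: open_simplex_def p_def)
qed

lemma separation:
  assumes n: "CARD('n::finite) \<ge> 2" and st: "1/4 \<le> s" "s < t" "t \<le> 1/2"
  shows "\<exists>p::real^'n. p \<in> open_simplex \<and> 1/12 \<le> norm (pif i s p - pif i t p)"
proof -
  obtain p :: "real^'n" where p: "p \<in> open_simplex" "p$i = s"
    using point_exists[OF n, of s i] st by auto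
  have "(pif i s p - pif i t p) $ i = s - 2 * s / (1 + s)"
    using p st by (simp add: pif_def)
  also have "\<dots> = - (s * (1 - s) / (1 + s))" using st by (simp add: field_simps)
  finally have eq: "\<bar>(pif i s p - pif i t p) $ i\<bar> = s * (1 - s) / (1 + s)"
    using st by simp
  have "(1 + s) / 12 \<le> s * (1 - s)"
  proof -
    have h: "s * s \<le> s * (1/2)" using st by (intro mult_left_mono) auto
    have "s * (1 - s) = s - s * s" by (simp add: algebra_simps)
    then have "1 + s \<le> 12 * (s * (1 - s))" using st h by linarith
    then show ?thesis by simp
  qed
  then have "1/12 \<le> s * (1 - s) / (1 + s)" using st by (simp add: field_simps)
  moreover have "\<bar>(pif i s p - pif i t p) $ i\<bar> \<le> norm (pif i s p - pif i t p)"
    by (rule component_le_norm_cart)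
  ultimately have "1/12 \<le> norm (pif i s p - pif i t p)" using eq by linarith
  then show ?thesis using p(1) by blast
qed

lemma not_separable:
  assumes n: "CARD('n::finite) \<ge> 2"
  shows "\<not> (\<exists>D. countable D \<and> D \<subseteq> (FG :: (real ^ 'n \<Rightarrow> real ^ 'n) set) \<and>
                  (\<forall>\<pi>\<in>FG. \<forall>e>0. \<exists>\<eta>\<in>D. sup_dist \<pi> \<eta> < e))"
proof
  assume "\<exists>D. countable D \<and> D \<subseteq> (FG :: (real ^ 'n \<Rightarrow> real ^ 'n) set) \<and>
                  (\<forall>\<pi>\<in>FG. \<forall>e>0. \<exists>\<eta>\<in>D. sup_dist \<pi> \<eta> < e)"
  then obtain D :: "(real ^ 'n \<Rightarrow> real ^ 'n) set" where D: "countable D" "D \<subseteq> FG"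
    "\<forall>\<pi>\<in>FG. \<forall>e>0. \<exists>\<eta>\<in>D. sup_dist \<pi> \<eta> < e" by blast
  obtain i :: 'n where True by simp
  define T where "T = {1/4<..<(1/2::real)}"
  have "\<forall>t\<in>T. \<exists>\<eta>\<in>D. sup_dist (pif i t) \<eta> < 1/24"
  proof
    fix t assume "t \<in> T"
    then have "0 < t" by (simp add: T_def)
    then have "pif i t \<in> FG" by (rule pif_FG)
    moreover have "(1/24::real) > 0" by simp
    ultimately show "\<exists>\<eta>\<in>D. sup_dist (pif i t) \<eta> < 1/24" using D(3) by blast
  qed
  then obtain h where h: "\<And>t. t \<in> T \<Longrightarrow> h t \<in> D \<and> sup_dist (pif i t) (h t) < 1/24"
    by metis
  have key: "False" if st: "s \<in> T" "t \<in> T" "s < t" "h s = h t" for s t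
  proof -
    obtain p :: "real^'n" where p: "p \<in> open_simplex" "1/12 \<le> norm (pif i s p - pif i t p)"
    proof -
      have "1/4 \<le> s" "t \<le> 1/2" using st by (auto simp: T_def)
      then show ?thesis using separation[OF n, of s t i] st(3) that by blast
    qed
    have "0 < s" "0 < t" using st by (auto simp: T_def)
    then have FGs: "pif i s \<in> FG" "pif i t \<in> FG" "h t \<in> FG" using st h D(2) by (auto intro: pif_FG)
    have "norm (pif i s p - pif i t p) \<le> norm (pif i s p - h t p) + norm (pif i t p - h t p)"
      using norm_triangle_ineq4[of "pif i s p - h t p" "pif i t p - h t p"] by simp
    also have "\<dots> \<le> sup_dist (pif i s) (h t) + sup_dist (pif i t) (h t)"
      using sup_dist_ge[OF FGs(1,3) p(1)] sup_dist_ge[OF FGs(2,3) p(1)] by linarith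
    also have "\<dots> < 1/12"
    proof -
      have "sup_dist (pif i s) (h s) < 1/24" "sup_dist (pif i t) (h t) < 1/24" using h st(1,2) by blast+
      then show ?thesis using st(4) by simp
    qed
    finally show False using p by simp
  qed
  have "inj_on h T"
  proof (rule inj_onI)
    fix s t assume "s \<in> T" "t \<in> T" "h s = h t"
    then show "s = t" using key[of s t] key[of t s] by (metis linorder_neqE_linordered_idom)
  qed
  moreover have "countable (h ` T)" using h D(1) by (auto intro: countable_subset)
  ultimately have "countable T" by (rule countable_image_inj_on[rotated])
  moreover have "uncountable T" unfolding T_def by (simp add: uncountable_open_interval)
  ultimately show False by simp
qed

theorem lemma4p2:
  assumes "CARD('n) \<ge> 2"
  shows "\<not> (\<forall>e>0. \<exists>D. finite D \<and> D \<subseteq> (FG :: (real ^ 'n \<Rightarrow> real ^ 'n) set) \<and>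
                  (\<forall>\<pi>\<in>FG. \<exists>\<eta>\<in>D. sup_dist \<pi> \<eta> < e))
         \<and> \<not> (\<exists>D. countable D \<and> D \<subseteq> (FG :: (real ^ 'n \<Rightarrow> real ^ 'n) set) \<and>
                  (\<forall>\<pi>\<in>FG. \<forall>e>0. \<exists>\<eta>\<in>D. sup_dist \<pi> \<eta> < e))"
proof (rule conjI)
  show "\<not> (\<exists>D. countable D \<and> D \<subseteq> (FG :: (real ^ 'n \<Rightarrow> real ^ 'n) set) \<and>
                  (\<forall>\<pi>\<in>FG. \<forall>e>0. \<exists>\<eta>\<in>D. sup_dist \<pi> \<eta> < e))"
    using not_separable[OF assms] .
  show "\<not> (\<forall>e>0. \<exists>D. finite D \<and> D \<subseteq> (FG :: (real ^ 'n \<Rightarrow> real ^ 'n) set) \<and>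
                  (\<forall>\<pi>\<in>FG. \<exists>\<eta>\<in>D. sup_dist \<pi> \<eta> < e))"
  proof
    assume A: "\<forall>e>0. \<exists>D. finite D \<and> D \<subseteq> (FG :: (real ^ 'n \<Rightarrow> real ^ 'n) set) \<and>
                  (\<forall>\<pi>\<in>FG. \<exists>\<eta>\<in>D. sup_dist \<pi> \<eta> < e)"
    have "\<forall>k::nat. \<exists>D. finite D \<and> D \<subseteq> (FG :: (real ^ 'n \<Rightarrow> real ^ 'n) set) \<and>
                  (\<forall>\<pi>\<in>FG. \<exists>\<eta>\<in>D. sup_dist \<pi> \<eta> < 1 / real (Suc k))"
      using A by simp
    then obtain Dk where Dk: "\<And>k. finite (Dk k) \<and> Dk k \<subseteq> (FG :: (real ^ 'n \<Rightarrow> real ^ 'n) set) \<and>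
                  (\<forall>\<pi>\<in>FG. \<exists>\<eta>\<in>Dk k. sup_dist \<pi> \<eta> < 1 / real (Suc k))"
      by metis
    have "countable (\<Union>k. Dk k)" using Dk by (intro countable_UN) (auto intro: countable_finite)
    moreover have "(\<Union>k. Dk k) \<subseteq> FG" using Dk by blast
    moreover have "\<forall>\<pi>\<in>FG. \<forall>e>0. \<exists>\<eta>\<in>(\<Union>k. Dk k). sup_dist \<pi> \<eta> < e"
    proof (intro ballI allI impI)
      fix \<pi> :: "real ^ 'n \<Rightarrow> real ^ 'n" and e :: real assume "\<pi> \<in> FG" "e > 0"
      obtain k where k: "inverse (real (Suc k)) < e" using reals_Archimedean[OF \<open>e > 0\<close>] by blast
      obtain \<eta> where "\<eta> \<in> Dk k" "sup_dist \<pi> \<eta> < 1 / real (Suc k)" using Dk \<open>\<pi> \<in> FG\<close> by blast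
      moreover have "1 / real (Suc k) = inverse (real (Suc k))" by (simp add: inverse_eq_divide)
      ultimately have "\<eta> \<in> Dk k" "sup_dist \<pi> \<eta> < e" using k by linarith+
      then show "\<exists>\<eta>\<in>(\<Union>k. Dk k). sup_dist \<pi> \<eta> < e" by blast
    qed
    ultimately show False using not_separable[OF assms] by blast
  qed
qed

end
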